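(* Let $C=\{c_1,\dots,c_m\}\subset\mathbb{R}$ with $c_1\le\dots\le c_m$, let $\mathcal{I}$ be a finite set of closed intervals in $\mathbb{R}$ and $f\ge0$ an integer such that every $I\in\mathcal{I}$ satisfies $|I\cap C|>f$. Let $T$ be the output of the following greedy procedure: start with $T=\emptyset$; for $t=1,\dots,m$ in order, if there exist $i,j$ with $1\le i\le t\le j\le m$ and $\delta_{i,j}(f)\ge|T\cap C_{i,j}|+(j-t+1)$ (current $T$), add $c_t$ to $T$. Write $T=\{c_{k_1},\dots,c_{k_r}\}$ with $k_1<\dots<k_r$, and let $\mathsf{opt}$ be the minimum size of a subset $S\subseteq C$ satisfying $|S\cap C_{i,j}|\ge\delta_{i,j}(f)$ for all $1\le i\le j\le m$. Then for every $t\in\{1,\dots,r\}$ there exists $T^*\subseteq C$ such that (1) $|T^*\cap C_{i,j}|\ge\delta_{i,j}(f)$ for all $1\le i\le j\le m$, (2) $|T^*|=\mathsf{opt}$, and (3) $\{c_{k_1},\dots,c_{k_t}\}\subseteq T^*$.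
   Context: For a set of points $X$, a set of intervals is $X$-disjoint if every point of $X$ lies in at most one of its intervals. For $1\le i\le j\le m$: $C_{i,j}=\{c_i,\dots,c_j\}$; $\mathcal{I}_{i,j}=\{I\in\mathcal{I}: I\cap C\subseteq C_{i,j}\}$; for $J\subseteq C_{i,j}$, $\delta_{i,j}(J)$ is the maximum size of a $(C_{i,j}\setminus J)$-disjoint subset of $\mathcal{I}_{i,j}$; and $\delta_{i,j}(f)=\max_{J\subseteq C_{i,j},|J|\le f}\delta_{i,j}(J)$. *)

theory Defs
  imports Complex_Main
begin

definition pts :: "(nat \<Rightarrow> real) \<Rightarrow> nat \<Rightarrow> real set" where
  "pts c m = c ` {1..m}"

definition Cij :: "(nat \<Rightarrow> real) \<Rightarrow> nat \<Rightarrow> nat \<Rightarrow> real set" where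
  "Cij c i j = c ` {i..j}"

definition Iij :: "(nat \<Rightarrow> real) \<Rightarrow> nat \<Rightarrow> real set set \<Rightarrow> nat \<Rightarrow> nat \<Rightarrow> real set set" where
  "Iij c m \<I> i j = {I \<in> \<I>. I \<inter> pts c m \<subseteq> Cij c i j}"

definition X_disjoint :: "real set \<Rightarrow> real set set \<Rightarrow> bool" where
  "X_disjoint X F \<longleftrightarrow> (\<forall>x\<in>X. card {I \<in> F. x \<in> I} \<le> 1)"

definition deltaJ :: "(nat \<Rightarrow> real) \<Rightarrow> nat \<Rightarrow> real set set \<Rightarrow> nat \<Rightarrow> nat \<Rightarrow> real set \<Rightarrow> nat" where
  "deltaJ c m \<I> i j J =
     Max {card F | F. F \<subseteq> Iij c m \<I> i j \<and> X_disjoint (Cij c i j - J) F}"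

definition delta :: "(nat \<Rightarrow> real) \<Rightarrow> nat \<Rightarrow> real set set \<Rightarrow> nat \<Rightarrow> nat \<Rightarrow> nat \<Rightarrow> nat" where
  "delta c m \<I> i j f =
     Max {deltaJ c m \<I> i j J | J. J \<subseteq> Cij c i j \<and> card J \<le> f}"

fun greedy_upto :: "(nat \<Rightarrow> real) \<Rightarrow> nat \<Rightarrow> real set set \<Rightarrow> nat \<Rightarrow> nat \<Rightarrow> real set" where
  "greedy_upto c m \<I> f 0 = {}"
| "greedy_upto c m \<I> f (Suc t) =
     (let T = greedy_upto c m \<I> f t in
      if (\<exists>i j. 1 \<le> i \<and> i \<le> Suc t \<and> Suc t \<le> j \<and> j \<le> m \<and>
               delta c m \<I> i j f \<ge> card (T \<inter> Cij c i j) + (j - Suc t + 1))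
      then insert (c (Suc t)) T else T)"

definition greedy :: "(nat \<Rightarrow> real) \<Rightarrow> nat \<Rightarrow> real set set \<Rightarrow> nat \<Rightarrow> real set" where
  "greedy c m \<I> f = greedy_upto c m \<I> f m"

definition feasible :: "(nat \<Rightarrow> real) \<Rightarrow> nat \<Rightarrow> real set set \<Rightarrow> nat \<Rightarrow> real set \<Rightarrow> bool" where
  "feasible c m \<I> f S \<longleftrightarrow>
     (\<forall>i j. 1 \<le> i \<and> i \<le> j \<and> j \<le> m \<longrightarrow> card (S \<inter> Cij c i j) \<ge> delta c m \<I> i j f)"

definition opt :: "(nat \<Rightarrow> real) \<Rightarrow> nat \<Rightarrow> real set set \<Rightarrow> nat \<Rightarrow> nat" where
  "opt c m \<I> f = Min {card S | S. S \<subseteq> pts c m \<and> feasible c m \<I> f S}"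

definition greedy_indices :: "(nat \<Rightarrow> real) \<Rightarrow> nat \<Rightarrow> real set set \<Rightarrow> nat \<Rightarrow> nat list" where
  "greedy_indices c m \<I> f = sorted_list_of_set {k \<in> {1..m}. c k \<in> greedy c m \<I> f}"

end

theory Submission
  imports Defs
begin

fun gi :: "(nat \<Rightarrow> nat \<Rightarrow> nat) \<Rightarrow> nat \<Rightarrow> nat \<Rightarrow> nat set" where
  "gi d m 0 = {}"
| "gi d m (Suc t) = (if (\<exists>i j. 1 \<le> i \<and> i \<le> Suc t \<and> Suc t \<le> j \<and> j \<le> m \<and>
       d i j \<ge> card (gi d m t \<inter> {i..j}) + (j - Suc t + 1))
     then insert (Suc t) (gi d m t) else gi d m t)"

definition feasI :: "(nat \<Rightarrow> nat \<Rightarrow> nat) \<Rightarrow> nat \<Rightarrow> nat set \<Rightarrow> bool" where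
  "feasI d m S \<longleftrightarrow> (\<forall>i j. 1 \<le> i \<and> i \<le> j \<and> j \<le> m \<longrightarrow> card (S \<inter> {i..j}) \<ge> d i j)"

lemma gi_sub: "gi d m t \<subseteq> {1..t}"
  by (induction t) auto

lemma exch:
  assumes "feasI d m S" "S \<subseteq> {1..m}" "t \<le> m"
  shows "\<exists>S'. S' \<subseteq> {1..m} \<and> feasI d m S' \<and> card S' \<le> card S \<and> S' \<inter> {1..t} = gi d m t"
  using assms(3)
proof (induction t)
  case 0
  then show ?case using assms by auto
next
  case (Suc t)
  then obtain S' where S': "S' \<subseteq> {1..m}" "feasI d m S'" "card S' \<le> card S" "S' \<inter> {1..t} = gi d m t"
    by auto
  define u where "u = Suc t"
  have finS': "finite S'" using S'(1) finite_subset by blast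
  have key: "gi d m t \<inter> {i..j} = S' \<inter> {i..t}" if "1 \<le> i" "u \<le> j" for i j
  proof -
    have "gi d m t \<inter> {i..j} = S' \<inter> {1..t} \<inter> {i..j}" using S'(4) by simp
    also have "\<dots> = S' \<inter> {i..t}" using that unfolding u_def by auto
    finally show ?thesis .
  qed
  have split: "card (S' \<inter> {i..j}) = card (S' \<inter> {i..t}) + card (S' \<inter> {u..j})"
    if "i \<le> u" "u \<le> j" for i j
  proof -
    have "S' \<inter> {i..j} = (S' \<inter> {i..t}) \<union> (S' \<inter> {u..j})" using that unfolding u_def by auto
    moreover have "(S' \<inter> {i..t}) \<inter> (S' \<inter> {u..j}) = {}" unfolding u_def by auto
    ultimately show ?thesis using finS' by (simp add: card_Un_disjoint)
  qed
  show ?case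
  proof (cases "\<exists>i j. 1 \<le> i \<and> i \<le> u \<and> u \<le> j \<and> j \<le> m \<and>
       d i j \<ge> card (gi d m t \<inter> {i..j}) + (j - u + 1)")
    case True
    then obtain i j where ij: "1 \<le> i" "i \<le> u" "u \<le> j" "j \<le> m"
      "d i j \<ge> card (gi d m t \<inter> {i..j}) + (j - u + 1)" by blast
    have uS: "u \<in> S'"
    proof (rule ccontr)
      assume "u \<notin> S'"
      then have "S' \<inter> {u..j} \<subseteq> {Suc u..j}" by (auto simp: le_less)
      then have "card (S' \<inter> {u..j}) \<le> j - u" using card_mono[of "{Suc u..j}"] by fastforce
      then have "card (S' \<inter> {i..j}) < d i j" using split[OF ij(2,3)] key[OF ij(1,3)] ij(3,5) by simp
      moreover have "card (S' \<inter> {i..j}) \<ge> d i j" using S'(2) ij unfolding feasI_def by auto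
      ultimately show False by simp
    qed
    have "S' \<inter> {1..u} = insert u (S' \<inter> {1..t})" using uS unfolding u_def by auto
    then have "S' \<inter> {1..Suc t} = gi d m (Suc t)" using True S'(4) unfolding u_def by simp
    then show ?thesis using S' by blast
  next
    case False
    then have nc: "d i j < card (gi d m t \<inter> {i..j}) + (j - u + 1)"
      if "1 \<le> i" "i \<le> u" "u \<le> j" "j \<le> m" for i j
      using that by (meson not_le)
    have gis: "gi d m (Suc t) = gi d m t" unfolding gi.simps using False[unfolded u_def] by (rule if_not_P)
    show ?thesis
    proof (cases "u \<in> S'")
      case False
      have "S' \<inter> {1..Suc t} = S' \<inter> {1..t}" using False unfolding u_def by (auto simp: le_Suc_eq)
      then show ?thesis using S' gis by auto
    next
      case True
      define R where "R = {k \<in> {u..m}. k \<notin> S'}"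
      define S'' where "S'' = (if R = {} then S' - {u} else insert (Min R) (S' - {u}))"
      have finR: "finite R" unfolding R_def by auto
      have MinR: "R \<noteq> {} \<Longrightarrow> Min R \<in> R" using finR by auto
      have MinR2: "R \<noteq> {} \<Longrightarrow> Min R \<notin> S' \<and> u < Min R \<and> Min R \<le> m"
        using MinR True unfolding R_def by (auto simp: le_less)
      have sub: "S'' \<subseteq> {1..m}" using S'(1) MinR2 unfolding S''_def u_def by (cases "R = {}") (auto simp: Suc_le_eq)
      have finS'': "finite S''" using sub finite_subset by blast
      have crd: "card S'' \<le> card S'"
      proof (cases "R = {}")
        case True
        then show ?thesis unfolding S''_def by (simp add: card_Diff1_le finS')
      next
        case False
        have "card S'' \<le> Suc (card (S' - {u}))" unfolding S''_def using False card_insert_le_m1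
          by (simp add: card_insert_if finS')
        also have "\<dots> = card S'" using True finS' card_Diff1_less[of S' u]
          by (simp add: card_Suc_Diff1)
        finally show ?thesis .
      qed
      have pre: "S'' \<inter> {1..Suc t} = gi d m t"
      proof -
        have "S'' \<inter> {1..Suc t} = S' \<inter> {1..t}"
          using MinR2 unfolding S''_def u_def by (cases "R = {}") (auto simp: le_Suc_eq)
        then show ?thesis using S'(4) by simp
      qed
      have feas: "feasI d m S''"
        unfolding feasI_def
      proof (intro allI impI)
        fix i j assume ij: "1 \<le> i \<and> i \<le> j \<and> j \<le> m"
        have dle: "d i j \<le> card (S' \<inter> {i..j})" using S'(2) ij unfolding feasI_def by auto
        show "d i j \<le> card (S'' \<inter> {i..j})"
        proof (cases "i \<le> u \<and> u \<le> j")
          case False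
          then have "S' \<inter> {i..j} \<subseteq> S'' \<inter> {i..j}" unfolding S''_def by auto
          then show ?thesis using dle card_mono finS'' by (meson inf.cobounded1 finite_subset le_trans)
        next
          case iuj: True
          show ?thesis
          proof (cases "R \<noteq> {} \<and> Min R \<le> j")
            case True
            have eq: "S'' \<inter> {i..j} = insert (Min R) ((S' \<inter> {i..j}) - {u})"
              using True MinR2 iuj unfolding S''_def by auto
            have "Min R \<notin> (S' \<inter> {i..j}) - {u}" using MinR2 True by auto
            then have "card (S'' \<inter> {i..j}) = Suc (card ((S' \<inter> {i..j}) - {u}))"
              unfolding eq using finS' by simp
            also have "\<dots> = card (S' \<inter> {i..j})"
              using \<open>u \<in> S'\<close> iuj finS' by (intro card_Suc_Diff1) auto
            finally show ?thesis using dle by simp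
          next
            case False
            have allin: "{u..j} \<subseteq> S'"
            proof
              fix k assume k: "k \<in> {u..j}"
              show "k \<in> S'"
              proof (rule ccontr)
                assume "k \<notin> S'"
                then have "k \<in> R" using k ij unfolding R_def by auto
                then have "R \<noteq> {}" "Min R \<le> k" using finR by auto
                then show False using False k by auto
              qed
            qed
            have "(S' \<inter> {i..t}) \<union> {Suc u..j} \<subseteq> S'' \<inter> {i..j}"
              using allin iuj unfolding S''_def u_def by auto
            moreover have "card ((S' \<inter> {i..t}) \<union> {Suc u..j}) = card (S' \<inter> {i..t}) + (j - u)"
              using finS' by (subst card_Un_disjoint) (auto simp: u_def)
            ultimately have "card (S' \<inter> {i..t}) + (j - u) \<le> card (S'' \<inter> {i..j})"
              using card_mono[OF finite_subset[OF inf.cobounded1 finS'']] by metis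
            moreover have "d i j < card (S' \<inter> {i..t}) + (j - u + 1)"
              using nc[of i j] key[of i j] ij iuj by auto
            ultimately show ?thesis by linarith
          qed
        qed
      qed
      show ?thesis using sub feas crd S'(3) pre gis by (intro exI[of _ S'']) auto
    qed
  qed
qed

lemma card_transfer:
  assumes inj: "inj_on c {1..m}" and A: "A \<subseteq> {1..m}" and "1 \<le> i" "j \<le> m"
  shows "card (c ` A \<inter> Cij c i j) = card (A \<inter> {i..j})"
proof -
  have sub: "{i..j} \<subseteq> {1..m}" using assms by auto
  have "c ` A \<inter> Cij c i j = c ` (A \<inter> {i..j})"
    unfolding Cij_def using inj_on_image_Int[OF inj A sub] by simp
  moreover have "inj_on c (A \<inter> {i..j})" using inj_on_subset[OF inj] A by blast
  ultimately show ?thesis by (simp add: card_image)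
qed

lemma greedy_transfer:
  assumes inj: "inj_on c {1..m}" and "t \<le> m"
  shows "greedy_upto c m I f t = c ` gi (\<lambda>i j. delta c m I i j f) m t"
  using assms(2)
proof (induction t)
  case 0 then show ?case by simp
next
  case (Suc t)
  let ?D = "\<lambda>i j. delta c m I i j f"
  have IH: "greedy_upto c m I f t = c ` gi ?D m t" using Suc by simp
  have gsub: "gi ?D m t \<subseteq> {1..m}" using gi_sub[of ?D m t] Suc.prems by auto
  have eqv: "(\<exists>i j. 1 \<le> i \<and> i \<le> Suc t \<and> Suc t \<le> j \<and> j \<le> m \<and>
               delta c m I i j f \<ge> card (c ` gi ?D m t \<inter> Cij c i j) + (j - Suc t + 1))
     \<longleftrightarrow> (\<exists>i j. 1 \<le> i \<and> i \<le> Suc t \<and> Suc t \<le> j \<and> j \<le> m \<and>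
               ?D i j \<ge> card (gi ?D m t \<inter> {i..j}) + (j - Suc t + 1))"
    using card_transfer[OF inj gsub] by metis
  show ?case
    unfolding greedy_upto.simps Let_def IH gi.simps eqv by (simp only: if_distrib[of "image c"] image_insert)
qed

lemma delta_le:
  assumes fin: "finite I" and big: "\<forall>X\<in>I. card (X \<inter> pts c m) > f"
  shows "delta c m I i j f \<le> Suc j - i"
proof -
  have dJ: "deltaJ c m I i j J \<le> Suc j - i" if J: "J \<subseteq> Cij c i j" "card J \<le> f" for J
  proof -
    have finC: "finite (Cij c i j)" unfolding Cij_def by simp
    have finJ: "finite J" using J finC finite_subset by blast
    have each: "card F \<le> Suc j - i" if F: "F \<subseteq> Iij c m I i j" "X_disjoint (Cij c i j - J) F" for F
    proof -
      have finF: "finite F" using F(1) fin unfolding Iij_def by (auto intro: finite_subset)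
      have ex: "\<exists>x. x \<in> X \<inter> pts c m - J" if "X \<in> F" for X
      proof (rule ccontr)
        assume "\<not> ?thesis"
        then have "X \<inter> pts c m \<subseteq> J" by blast
        then have "card (X \<inter> pts c m) \<le> card J" using finJ card_mono by blast
        moreover have "X \<in> I" using that F(1) unfolding Iij_def by auto
        ultimately show False using big J(2) by fastforce
      qed
      define p where "p X = (SOME x. x \<in> X \<inter> pts c m - J)" for X
      have p: "p X \<in> X \<inter> pts c m - J" if "X \<in> F" for X
        unfolding p_def using ex[OF that] by (rule someI_ex)
      have pC: "p X \<in> Cij c i j - J" if "X \<in> F" for X
        using p[OF that] that F(1) unfolding Iij_def by auto
      have injp: "inj_on p F"
      proof
        fix X Y assume XY: "X \<in> F" "Y \<in> F" "p X = p Y"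
        have "card {Z \<in> F. p X \<in> Z} \<le> 1" using F(2) pC[OF XY(1)] unfolding X_disjoint_def by blast
        moreover have "X \<in> {Z \<in> F. p X \<in> Z}" "Y \<in> {Z \<in> F. p X \<in> Z}" using p[OF XY(1)] p[OF XY(2)] XY by auto
        moreover have "finite {Z \<in> F. p X \<in> Z}" using finF by auto
        ultimately show "X = Y" using card_le_Suc0_iff_eq by (metis One_nat_def)
      qed
      have "card F \<le> card (Cij c i j - J)"
        using card_inj_on_le[OF injp _ ] pC finC by blast
      also have "\<dots> \<le> card (Cij c i j)" using finC by (simp add: card_mono)
      also have "\<dots> \<le> card {i..j}" unfolding Cij_def by (rule card_image_le) simp
      finally show ?thesis by simp
    qed
    have fs: "finite {card F | F. F \<subseteq> Iij c m I i j \<and> X_disjoint (Cij c i j - J) F}"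
    proof -
      have "finite (Pow (Iij c m I i j))" using fin unfolding Iij_def by simp
      then show ?thesis by (simp add: setcompr_eq_image)
    qed
    have ne: "{card F | F. F \<subseteq> Iij c m I i j \<and> X_disjoint (Cij c i j - J) F} \<noteq> {}"
      unfolding X_disjoint_def by auto
    show ?thesis unfolding deltaJ_def using fs ne each by (subst Max_le_iff) auto
  qed
  have fs: "finite {deltaJ c m I i j J | J. J \<subseteq> Cij c i j \<and> card J \<le> f}"
  proof -
    have "finite (Pow (Cij c i j))" unfolding Cij_def by simp
    then show ?thesis by (simp add: setcompr_eq_image)
  qed
  have ne: "{deltaJ c m I i j J | J. J \<subseteq> Cij c i j \<and> card J \<le> f} \<noteq> {}" by auto
  show ?thesis unfolding delta_def using fs ne dJ by (subst Max_le_iff) auto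
qed

lemma feas_transfer:
  assumes inj: "inj_on c {1..m}" and A: "A \<subseteq> {1..m}"
  shows "feasible c m I f (c ` A) \<longleftrightarrow> feasI (\<lambda>i j. delta c m I i j f) m A"
  unfolding feasible_def feasI_def using card_transfer[OF inj A] by metis

theorem lemma8:
  fixes c :: "nat \<Rightarrow> real" and m f :: nat and \<I> :: "real set set"
  assumes sorted: "\<And>a b. 1 \<le> a \<Longrightarrow> a \<le> b \<Longrightarrow> b \<le> m \<Longrightarrow> c a \<le> c b"
    and distinct: "inj_on c {1..m}"
    and fin: "finite \<I>"
    and closed: "\<forall>I\<in>\<I>. \<exists>a b. a \<le> b \<and> I = {a..b}"
    and big: "\<forall>I\<in>\<I>. card (I \<inter> pts c m) > f"
  shows "\<forall>t \<in> {1..length (greedy_indices c m \<I> f)}.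
           \<exists>Tstar \<subseteq> pts c m.
              feasible c m \<I> f Tstar \<and>
              card Tstar = opt c m \<I> f \<and>
              c ` set (take t (greedy_indices c m \<I> f)) \<subseteq> Tstar"
proof -
  let ?D = "\<lambda>i j. delta c m \<I> i j f"
  let ?G = "gi ?D m m"
  have Gsub: "?G \<subseteq> {1..m}" using gi_sub by blast
  have gr: "greedy c m \<I> f = c ` ?G" unfolding greedy_def using greedy_transfer[OF distinct] by simp
  have best: "feasI ?D m ?G \<and> card ?G \<le> card S" if SS: "feasI ?D m S" "S \<subseteq> {1..m}" for S
  proof -
    obtain S' where S': "S' \<subseteq> {1..m}" "feasI ?D m S'" "card S' \<le> card S" "S' \<inter> {1..m} = ?G"
      using exch[OF SS(1) SS(2) order.refl] by blast
    then have "S' = ?G" by auto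
    then show ?thesis using S' by simp
  qed
  have full: "feasI ?D m {1..m}" unfolding feasI_def using delta_le[OF fin big] by auto
  have Gfeas: "feasI ?D m ?G" using best[OF full] by simp
  have feasT: "feasible c m \<I> f (greedy c m \<I> f)" unfolding gr feas_transfer[OF distinct Gsub] by (rule Gfeas)
  have cardG: "card (greedy c m \<I> f) = card ?G" unfolding gr
    using inj_on_subset[OF distinct Gsub] by (simp add: card_image)
  have optG: "opt c m \<I> f = card (greedy c m \<I> f)"
    unfolding opt_def
  proof (rule Min_eqI)
    have "{card S |S. S \<subseteq> pts c m \<and> feasible c m \<I> f S} \<subseteq> card ` Pow (pts c m)" by auto
    then show "finite {card S |S. S \<subseteq> pts c m \<and> feasible c m \<I> f S}"
      unfolding pts_def by (rule finite_subset) simp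
  next
    fix y assume "y \<in> {card S |S. S \<subseteq> pts c m \<and> feasible c m \<I> f S}"
    then obtain S where S: "y = card S" "S \<subseteq> pts c m" "feasible c m \<I> f S" by auto
    define S0 where "S0 = {k \<in> {1..m}. c k \<in> S}"
    have S0s: "S0 \<subseteq> {1..m}" unfolding S0_def by auto
    have SS0: "S = c ` S0" using S(2) unfolding S0_def pts_def by auto
    have "feasI ?D m S0" using S(3) unfolding SS0 feas_transfer[OF distinct S0s] .
    then have "card ?G \<le> card S0" using best S0s by blast
    also have "\<dots> = card S" unfolding SS0 using inj_on_subset[OF distinct S0s] by (simp add: card_image)
    finally show "card (greedy c m \<I> f) \<le> y" using cardG S(1) by simp
  next
    show "card (greedy c m \<I> f) \<in> {card S |S. S \<subseteq> pts c m \<and> feasible c m \<I> f S}"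
      using feasT Gsub gr unfolding pts_def by blast
  qed
  have gpts: "greedy c m \<I> f \<subseteq> pts c m" using gr Gsub unfolding pts_def by auto
  have tk: "c ` set (take t (greedy_indices c m \<I> f)) \<subseteq> greedy c m \<I> f" for t
  proof -
    have "set (greedy_indices c m \<I> f) = {k \<in> {1..m}. c k \<in> greedy c m \<I> f}"
      unfolding greedy_indices_def by simp
    then show ?thesis using set_take_subset[of t "greedy_indices c m \<I> f"] by auto
  qed
  show ?thesis using gpts feasT optG tk by metis
qed

end
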